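(* Let $G$ be a sofic group and $D$ a division ring. Then the group ring $D(G)$ is stably finite, i.e. for every $n\ge1$ the matrix ring $\mathrm{Mat}_{n\times n}(D(G))$ is directly finite: whenever $a,b\in \mathrm{Mat}_{n\times n}(D(G))$ satisfy $ab=1$, then $ba=1$. *)

theory Defs
  imports "HOL-Library.Poly_Mapping" "HOL-Combinatorics.Permutations" "Jordan_Normal_Form.Matrix"
begin

text \<open>Groups are represented as types of class group_add (additive notation, NOT assumed
commutative): the group operation is +, the neutral element 0.
The group ring D(G) is the type of finitely supported functions G to D with
convolution product (Poly_Mapping), which is a ring_1 when G is a monoid and D a ring_1.\<close>

definition hamming_dist :: "nat \<Rightarrow> (nat \<Rightarrow> nat) \<Rightarrow> (nat \<Rightarrow> nat) \<Rightarrow> real" where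
  "hamming_dist m \<sigma> \<tau> = real (card {i \<in> {..<m}. \<sigma> i \<noteq> \<tau> i}) / real m"

definition sofic :: "'g::group_add itself \<Rightarrow> bool" where
  "sofic _ \<longleftrightarrow>
     (\<forall>(F::'g set) (\<epsilon>::real). finite F \<and> \<epsilon> > 0 \<longrightarrow>
        (\<exists>m::nat. m > 0 \<and> (\<exists>\<sigma>::'g \<Rightarrow> nat \<Rightarrow> nat.
           (\<forall>g. \<sigma> g permutes {..<m}) \<and>
           (\<forall>g\<in>F. \<forall>h\<in>F. hamming_dist m (\<sigma> (g + h)) (\<sigma> g \<circ> \<sigma> h) < \<epsilon>) \<and>
           (\<forall>g\<in>F. g \<noteq> 0 \<longrightarrow> hamming_dist m (\<sigma> g) id > 1 - \<epsilon>))))"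

end

theory Submission
  imports Defs
begin

abbreviation pk where "pk \<equiv> Poly_Mapping.keys"
abbreviation pl where "pl \<equiv> Poly_Mapping.lookup"

lemma lookup_mult_keys:
  fixes f g :: "'g::monoid_add \<Rightarrow>\<^sub>0 'd::ring_1"
  shows "pl (f * g) k = (\<Sum>l\<in>pk f. \<Sum>q\<in>pk g. if k = l + q then pl f l * pl g q else 0)"
proof -
  have inner: "(\<Sum>q. pl g q when k = l + q) = (\<Sum>q\<in>pk g. pl g q when k = l + q)" for l
    by (rule Sum_any.expand_superset) (auto simp: Poly_Mapping.in_keys_iff)
  have "pl (f * g) k = (\<Sum>l. pl f l * (\<Sum>q\<in>pk g. pl g q when k = l + q))"
    by (simp add: lookup_mult inner)
  also have "\<dots> = (\<Sum>l\<in>pk f. pl f l * (\<Sum>q\<in>pk g. pl g q when k = l + q))"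
    by (rule Sum_any.expand_superset) (auto simp: Poly_Mapping.in_keys_iff)
  also have "\<dots> = (\<Sum>l\<in>pk f. \<Sum>q\<in>pk g. if k = l + q then pl f l * pl g q else 0)"
    by (auto simp: sum_distrib_left when_def intro!: sum.cong)
  finally show ?thesis .
qed

lemma dependent:
  fixes v :: "'k \<Rightarrow> 'c \<Rightarrow> 'd::division_ring"
  assumes "finite C" "finite K" "card C < card K"
  shows "\<exists>lam. (\<exists>k\<in>K. lam k \<noteq> 0) \<and> (\<forall>c\<in>C. (\<Sum>k\<in>K. v k c * lam k) = 0)"
  using assms
proof (induction C arbitrary: K v rule: finite_induct)
  case empty
  then obtain k where "k \<in> K" by fastforce
  then show ?case by (intro exI[of _ "\<lambda>_. 1"]) auto
next
  case (insert c0 C)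
  show ?case
  proof (cases "\<forall>k\<in>K. v k c0 = 0")
    case True
    have "card C < card K" using insert by simp
    with insert.IH[of K v] insert.prems(1) obtain lam where
      lam: "\<exists>k\<in>K. lam k \<noteq> 0" "\<forall>c\<in>C. (\<Sum>k\<in>K. v k c * lam k) = 0" by blast
    show ?thesis using lam True by (intro exI[of _ lam]) auto
  next
    case False
    then obtain k0 where k0: "k0 \<in> K" "v k0 c0 \<noteq> 0" by auto
    define w where "w k c = v k c - v k0 c * (inverse (v k0 c0) * v k c0)" for k c
    have "card C < card (K - {k0})" using insert.prems k0 insert.hyps by auto
    from insert.IH[of "K - {k0}" w, OF _ this] insert.prems obtain mu where
      mu: "\<exists>k\<in>K - {k0}. mu k \<noteq> 0" "\<forall>c\<in>C. (\<Sum>k\<in>K - {k0}. w k c * mu k) = 0" by auto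
    define s where "s = (\<Sum>k\<in>K - {k0}. inverse (v k0 c0) * v k c0 * mu k)"
    define lam where "lam k = (if k = k0 then - s else mu k)" for k
    have key: "(\<Sum>k\<in>K. v k c * lam k) = (\<Sum>k\<in>K - {k0}. w k c * mu k)" for c
    proof -
      have "(\<Sum>k\<in>K. v k c * lam k) = v k0 c * lam k0 + (\<Sum>k\<in>K - {k0}. v k c * lam k)"
        using k0 insert.prems by (simp add: sum.remove)
      also have "(\<Sum>k\<in>K - {k0}. v k c * lam k) = (\<Sum>k\<in>K - {k0}. v k c * mu k)"
        by (auto simp: lam_def intro!: sum.cong)
      also have "(\<Sum>k\<in>K - {k0}. w k c * mu k) = (\<Sum>k\<in>K - {k0}. v k c * mu k) - v k0 c * s"
        by (simp add: w_def s_def algebra_simps sum_subtractf sum_distrib_left mult.assoc)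
      ultimately show ?thesis by (simp add: lam_def)
    qed
    have w0: "w k c0 = 0" for k
      using k0 by (simp add: w_def mult.assoc[symmetric])
    show ?thesis
    proof (intro exI[of _ lam] conjI ballI)
      show "\<exists>k\<in>K. lam k \<noteq> 0" using mu(1) by (auto simp: lam_def)
    next
      fix c assume "c \<in> insert c0 C"
      then show "(\<Sum>k\<in>K. v k c * lam k) = 0"
        using mu(2) by (auto simp: key w0)
    qed
  qed
qed

definition M :: "('g \<Rightarrow> nat \<Rightarrow> nat) \<Rightarrow> ('g \<Rightarrow>\<^sub>0 'd::ring_1) \<Rightarrow> nat \<Rightarrow> nat \<Rightarrow> 'd" where
  "M \<sigma> x p q = (\<Sum>g\<in>pk x. if \<sigma> g q = p then pl x g else 0)"

lemma M_superset:
  assumes "finite S" "pk x \<subseteq> S"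
  shows "M \<sigma> x p q = (\<Sum>g\<in>S. if \<sigma> g q = p then pl x g else 0)"
  unfolding M_def using assms
  by (intro sum.mono_neutral_left) (auto simp: Poly_Mapping.in_keys_iff)

lemma M_zero[simp]: "M \<sigma> 0 p q = 0"
  by (simp add: M_def)

lemma M_add: "M \<sigma> (x + y) p q = M \<sigma> x p q + M \<sigma> y p q"
proof -
  have S: "finite (pk x \<union> pk y)" by simp
  have "pk (x + y) \<subseteq> pk x \<union> pk y" by (rule Poly_Mapping.keys_add)
  then show ?thesis
    using M_superset[OF S, of "x+y"] M_superset[OF S, of x] M_superset[OF S, of y]
    by (simp add: lookup_add sum.distrib[symmetric] if_distrib cong: if_cong)
qed

lemma M_sum: "M \<sigma> (sum f T) p q = (\<Sum>t\<in>T. M \<sigma> (f t) p q)"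
  by (induction T rule: infinite_finite_induct) (auto simp: M_add)

lemma M_one: "M \<sigma> (1::'g::zero \<Rightarrow>\<^sub>0 'd::ring_1) p q = (if \<sigma> 0 q = p then 1 else 0)"
proof -
  have "M \<sigma> (1::'g::zero \<Rightarrow>\<^sub>0 'd::ring_1) p q = (\<Sum>g\<in>{0}. if \<sigma> g q = p then pl 1 g else 0)"
    by (rule M_superset) (auto simp: lookup_one Poly_Mapping.in_keys_iff)
  then show ?thesis by (simp add: lookup_one)
qed

lemma M_mult:
  fixes x y :: "'g::monoid_add \<Rightarrow>\<^sub>0 'd::ring_1"
  assumes mul: "\<forall>g\<in>pk x. \<forall>h\<in>pk y. \<sigma> g (\<sigma> h q) = \<sigma> (g+h) q"
    and lt: "\<forall>h\<in>pk y. \<sigma> h q < m"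
  shows "(\<Sum>p<m. M \<sigma> x r p * M \<sigma> y p q) = M \<sigma> (x*y) r q"
proof -
  let ?c = "\<lambda>g h. pl x g * pl y h"
  have "(\<Sum>p<m. M \<sigma> x r p * M \<sigma> y p q) =
     (\<Sum>p<m. \<Sum>g\<in>pk x. \<Sum>h\<in>pk y. if \<sigma> g p = r \<and> \<sigma> h q = p then ?c g h else 0)"
    unfolding M_def sum_product
    by (rule sum.cong[OF refl], rule sum.cong[OF refl], rule sum.cong[OF refl]) auto
  also have "\<dots> = (\<Sum>g\<in>pk x. \<Sum>h\<in>pk y. \<Sum>p<m. if \<sigma> g p = r \<and> \<sigma> h q = p then ?c g h else 0)"
    by (subst sum.swap) (rule sum.cong[OF refl], rule sum.swap)
  also have "\<dots> = (\<Sum>g\<in>pk x. \<Sum>h\<in>pk y. if \<sigma> (g+h) q = r then ?c g h else 0)"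
  proof (intro sum.cong refl)
    fix g h assume g: "g \<in> pk x" and h: "h \<in> pk y"
    have "(\<Sum>p<m. if \<sigma> g p = r \<and> \<sigma> h q = p then ?c g h else 0) =
          (\<Sum>p<m. if \<sigma> h q = p then (if \<sigma> g (\<sigma> h q) = r then ?c g h else 0) else 0)"
      by (rule sum.cong) auto
    also have "\<dots> = (if \<sigma> g (\<sigma> h q) = r then ?c g h else 0)"
      using lt h by (simp add: sum.delta)
    finally show "(\<Sum>p<m. if \<sigma> g p = r \<and> \<sigma> h q = p then ?c g h else 0) =
        (if \<sigma> (g+h) q = r then ?c g h else 0)" using mul g h by simp
  qed
  also have "\<dots> = M \<sigma> (x*y) r q"
  proof -
    define S where "S = (\<lambda>(g,h). g+h) ` (pk x \<times> pk y)"
    have finS: "finite S" by (simp add: S_def)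
    have sub: "pk (x*y) \<subseteq> S"
    proof
      fix k assume "k \<in> pk (x*y)"
      then have "pl (x*y) k \<noteq> 0" by (simp add: Poly_Mapping.in_keys_iff)
      then obtain g where g: "g \<in> pk x" and nz:
          "(\<Sum>q\<in>pk y. if k = g + q then pl x g * pl y q else 0) \<noteq> 0"
        unfolding lookup_mult_keys by (rule sum.not_neutral_contains_not_neutral)
      from nz obtain h where "h \<in> pk y" "(if k = g + h then pl x g * pl y h else 0) \<noteq> 0"
        by (rule sum.not_neutral_contains_not_neutral)
      with g have "g \<in> pk x" "h \<in> pk y" "k = g + h" by (auto split: if_splits)
      then show "k \<in> S" by (auto simp: S_def)
    qed
    have "M \<sigma> (x*y) r q = (\<Sum>k\<in>S. if \<sigma> k q = r then pl (x*y) k else 0)"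
      by (rule M_superset[OF finS sub])
    also have "\<dots> = (\<Sum>k\<in>S. \<Sum>g\<in>pk x. \<Sum>h\<in>pk y. if \<sigma> k q = r \<and> k = g + h then ?c g h else 0)"
      by (auto simp: lookup_mult_keys intro!: sum.cong)
    also have "\<dots> = (\<Sum>g\<in>pk x. \<Sum>h\<in>pk y. \<Sum>k\<in>S. if \<sigma> k q = r \<and> k = g + h then ?c g h else 0)"
      by (subst sum.swap) (rule sum.cong[OF refl], rule sum.swap)
    also have "\<dots> = (\<Sum>g\<in>pk x. \<Sum>h\<in>pk y. if \<sigma> (g+h) q = r then ?c g h else 0)"
    proof (intro sum.cong refl)
      fix g h assume g: "g \<in> pk x" and h: "h \<in> pk y"
      have "g + h \<in> S" using g h by (auto simp: S_def)
      have "(\<Sum>k\<in>S. if \<sigma> k q = r \<and> k = g + h then ?c g h else 0) =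
            (\<Sum>k\<in>S. if g + h = k then (if \<sigma> (g+h) q = r then ?c g h else 0) else 0)"
        by (rule sum.cong) auto
      also have "\<dots> = (if \<sigma> (g+h) q = r then ?c g h else 0)"
        using \<open>g + h \<in> S\<close> finS by (simp add: sum.delta)
      finally show "(\<Sum>k\<in>S. if \<sigma> k q = r \<and> k = g + h then ?c g h else 0) =
        (if \<sigma> (g+h) q = r then ?c g h else 0)" .
    qed
    finally show ?thesis by simp
  qed
  finally show ?thesis .
qed

lemma greedy:
  fixes conf :: "'a \<Rightarrow> 'a \<Rightarrow> bool"
  assumes "finite W"
    and nb: "\<And>q. finite {q'. conf q q' \<or> conf q' q} \<and> card {q'. conf q q' \<or> conf q' q} \<le> e"
  shows "\<exists>Q\<subseteq>W. (\<forall>q\<in>Q. \<forall>q'\<in>Q. q \<noteq> q' \<longrightarrow> \<not> conf q q') \<and> card W \<le> (e+1) * card Q"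
  using assms(1)
proof (induction "card W" arbitrary: W rule: less_induct)
  case less
  show ?case
  proof (cases "W = {}")
    case True then show ?thesis by auto
  next
    case False
    then obtain q where q: "q \<in> W" by auto
    define N where "N = {q'. conf q q' \<or> conf q' q}"
    define W' where "W' = W - insert q N"
    have finN: "finite N" "card N \<le> e" using nb[of q] by (auto simp: N_def)
    have "card W' < card W" unfolding W'_def using q less.prems
      by (intro psubset_card_mono) auto
    then obtain Q' where Q': "Q' \<subseteq> W'" "\<forall>q\<in>Q'. \<forall>q'\<in>Q'. q \<noteq> q' \<longrightarrow> \<not> conf q q'"
      "card W' \<le> (e+1) * card Q'"
      using less.hyps[of W'] less.prems by (auto simp: W'_def)
    have "card W \<le> card (W' \<union> insert q N)" using less.prems finN
      by (intro card_mono) (auto simp: W'_def)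
    also have "\<dots> \<le> card W' + card (insert q N)" by (rule card_Un_le)
    also have "\<dots> \<le> card W' + (e + 1)" using finN card_insert_le_m1
      by (simp add: card_insert_if)
    finally have cW: "card W \<le> card W' + (e + 1)" .
    have qQ': "q \<notin> Q'" using Q'(1) by (auto simp: W'_def)
    have finQ': "finite Q'" using Q'(1) less.prems finite_subset by (auto simp: W'_def)
    show ?thesis
    proof (intro exI[of _ "insert q Q'"] conjI)
      show "insert q Q' \<subseteq> W" using q Q'(1) by (auto simp: W'_def)
      show "\<forall>a\<in>insert q Q'. \<forall>b\<in>insert q Q'. a \<noteq> b \<longrightarrow> \<not> conf a b"
        using Q' by (auto simp: W'_def N_def)
      show "card W \<le> (e + 1) * card (insert q Q')"
        using cW Q'(3) qQ' finQ' by simp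
    qed
  qed
qed

lemma col_mult:
  fixes Y Z :: "('g::monoid_add \<Rightarrow>\<^sub>0 'd::ring_1) mat"
  assumes Y: "Y \<in> carrier_mat n n" and Z: "Z \<in> carrier_mat n n" and s: "s < n" and r: "r < n"
    and mul: "\<forall>t<n. \<forall>g\<in>pk (Y$$(r,t)). \<forall>h\<in>pk (Z$$(t,s)). \<sigma> g (\<sigma> h q) = \<sigma> (g+h) q"
    and lt: "\<forall>t<n. \<forall>h\<in>pk (Z$$(t,s)). \<sigma> h q < m"
  shows "(\<Sum>c\<in>{..<n}\<times>{..<m}. M \<sigma> (Y$$(r,fst c)) p (snd c) * M \<sigma> (Z$$(fst c,s)) (snd c) q)
       = M \<sigma> ((Y*Z)$$(r,s)) p q"
proof -
  have "(\<Sum>c\<in>{..<n}\<times>{..<m}. M \<sigma> (Y$$(r,fst c)) p (snd c) * M \<sigma> (Z$$(fst c,s)) (snd c) q)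
      = (\<Sum>t<n. \<Sum>p'<m. M \<sigma> (Y$$(r,t)) p p' * M \<sigma> (Z$$(t,s)) p' q)"
    by (simp add: sum.cartesian_product case_prod_beta)
  also have "\<dots> = (\<Sum>t<n. M \<sigma> (Y$$(r,t) * Z$$(t,s)) p q)"
    using mul lt by (intro sum.cong refl M_mult) auto
  also have "\<dots> = M \<sigma> (\<Sum>t<n. Y$$(r,t) * Z$$(t,s)) p q"
    by (simp add: M_sum)
  also have "(\<Sum>t<n. Y$$(r,t) * Z$$(t,s)) = (Y*Z)$$(r,s)"
    using Y Z r s by (auto simp: scalar_prod_def atLeast0LessThan intro!: sum.cong)
  finally show ?thesis .
qed

theorem mainTheorem2:
  fixes A B :: "('g::group_add \<Rightarrow>\<^sub>0 'd::division_ring) mat" and n :: nat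
  assumes "sofic TYPE('g)"
    and "n \<ge> 1"
    and "A \<in> carrier_mat n n" and "B \<in> carrier_mat n n"
    and "A * B = 1\<^sub>m n"
  shows "B * A = 1\<^sub>m n"
proof (rule ccontr)
  assume ne: "B * A \<noteq> 1\<^sub>m n"
  note A = assms(3) and B = assms(4) and AB = assms(5)
  define X where "X = 1\<^sub>m n - B * A"
  have BA: "B * A \<in> carrier_mat n n" using A B by simp
  have X: "X \<in> carrier_mat n n" using BA unfolding X_def by (rule minus_carrier_mat)
  have AX: "A * X = 0\<^sub>m n n"
  proof -
    have "A * X = A * 1\<^sub>m n - A * (B * A)" unfolding X_def by (rule mult_minus_distrib_mat[OF A one_carrier_mat BA])
    also have "A * (B * A) = A" using A B AB by (simp add: assoc_mult_mat[symmetric])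
    finally show ?thesis using A by simp
  qed
  obtain r0 s0 where rs: "r0 < n" "s0 < n" "X $$ (r0,s0) \<noteq> 0"
  proof -
    have "\<exists>i<n. \<exists>j<n. (B*A)$$(i,j) \<noteq> 1\<^sub>m n $$ (i,j)"
    proof (rule ccontr)
      assume "\<not> ?thesis"
      then have "B * A = 1\<^sub>m n" using BA by (intro eq_matI) auto
      with ne show False by simp
    qed
    then obtain i j where "i < n" "j < n" "(B*A)$$(i,j) \<noteq> 1\<^sub>m n $$ (i,j)" by blast
    moreover have "X $$ (i,j) = 1\<^sub>m n $$ (i,j) - (B*A)$$(i,j)" unfolding X_def
      using \<open>i<n\<close> \<open>j<n\<close> BA by (intro index_minus_mat(1)) auto
    ultimately show ?thesis using that by (metis right_minus_eq)
  qed
  define S where "S = pk (X$$(r0,s0))"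
  obtain g0 where g0: "g0 \<in> S" using rs(3) by (auto simp: S_def simp flip: keys_eq_empty)
  define x0 where "x0 = pl (X$$(r0,s0)) g0"
  have x0: "x0 \<noteq> 0" using g0 by (simp add: x0_def S_def Poly_Mapping.in_keys_iff)
  define E where "E = (\<Union>r<n. \<Union>s<n. pk (A$$(r,s)) \<union> pk (B$$(r,s)) \<union> pk (X$$(r,s)))"
  define F where "F = E \<union> {0} \<union> (\<lambda>g. -g + g0) ` S"
  have finF: "finite F" by (simp add: F_def E_def S_def)
  have SF: "S \<subseteq> F" using rs by (auto simp: F_def E_def S_def)
  have AF: "pk (A$$(r,s)) \<subseteq> F" "pk (B$$(r,s)) \<subseteq> F" "pk (X$$(r,s)) \<subseteq> F"
    if "r < n" "s < n" for r s using that by (auto simp: F_def E_def)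
  define T where "T = card F"
  define d where "d = 2 * card S + 1"
  define K0 where "K0 = T*T+T"
  define L where "L = K0*(n*d+1)+1"
  have Lpos: "L > 0" by (simp add: L_def)
  obtain m \<sigma> where m: "m > 0" and perm: "\<forall>g. \<sigma> g permutes {..<m}"
    and mulh: "\<forall>g\<in>F. \<forall>h\<in>F. hamming_dist m (\<sigma> (g+h)) (\<sigma> g \<circ> \<sigma> h) < 1 / real L"
    and freeh: "\<forall>g\<in>F. g \<noteq> 0 \<longrightarrow> hamming_dist m (\<sigma> g) id > 1 - 1 / real L"
    using assms(1)[unfolded sofic_def, rule_format, of F "1 / real L"] finF Lpos by auto
  have inj: "inj (\<sigma> g)" for g using perm permutes_inj by blast
  have ltm: "\<sigma> g q < m" if "q < m" for g q using perm permutes_in_image[of "\<sigma> g" "{..<m}" q] that by auto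
  define B1 where "B1 g h = {q\<in>{..<m}. \<sigma> (g+h) q \<noteq> (\<sigma> g \<circ> \<sigma> h) q}" for g h
  define B2 where "B2 k = {q\<in>{..<m}. \<sigma> k q = q}" for k
  have c1: "card (B1 g h) * L < m" if "g\<in>F" "h\<in>F" for g h
  proof -
    have "real (card (B1 g h)) / real m < 1 / real L"
      using mulh that by (simp add: hamming_dist_def B1_def)
    then have "real (card (B1 g h)) * real L < real m" using m Lpos
      by (simp add: field_simps)
    then show ?thesis by (simp flip: of_nat_mult)
  qed
  have c2: "card (B2 k) * L < m" if "k\<in>F" "k \<noteq> 0" for k
  proof -
    define N where "N = {q\<in>{..<m}. \<sigma> k q \<noteq> id q}"
    have "real (card N) / real m > 1 - 1 / real L"
      using freeh that by (simp add: hamming_dist_def N_def)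
    then have h: "real (card N) * real L > real m * real L - real m" using m Lpos
      by (simp add: field_simps)
    have "{..<m} = B2 k \<union> N" "B2 k \<inter> N = {}" by (auto simp: B2_def N_def)
    then have "m = card (B2 k) + card N"
      by (metis card_Un_disjoint card_lessThan finite_Un finite_lessThan)
    then have "real m = real (card (B2 k)) + real (card N)" by simp
    with h have "real (card (B2 k)) * real L < real m" by (simp add: algebra_simps)
    then show ?thesis by (simp flip: of_nat_mult)
  qed
  define Bad where "Bad = (\<Union>g\<in>F. \<Union>h\<in>F. B1 g h) \<union> (\<Union>k\<in>F-{0}. B2 k)"
  have Bad_sub: "Bad \<subseteq> {..<m}" by (auto simp: Bad_def B1_def B2_def)
  have cBad: "card Bad * L \<le> K0 * m"
  proof -
    have "card Bad \<le> card (\<Union>g\<in>F. \<Union>h\<in>F. B1 g h) + card (\<Union>k\<in>F-{0}. B2 k)"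
      unfolding Bad_def by (rule card_Un_le)
    also have "card (\<Union>g\<in>F. \<Union>h\<in>F. B1 g h) \<le> (\<Sum>g\<in>F. card (\<Union>h\<in>F. B1 g h))"
      by (rule card_UN_le) (simp add: finF)
    also have "\<dots> \<le> (\<Sum>g\<in>F. \<Sum>h\<in>F. card (B1 g h))"
      by (intro sum_mono card_UN_le finF)
    also have "card (\<Union>k\<in>F-{0}. B2 k) \<le> (\<Sum>k\<in>F-{0}. card (B2 k))"
      by (rule card_UN_le) (simp add: finF)
    finally have "card Bad * L \<le> ((\<Sum>g\<in>F. \<Sum>h\<in>F. card (B1 g h)) + (\<Sum>k\<in>F-{0}. card (B2 k))) * L"
      by simp
    also have "\<dots> = (\<Sum>g\<in>F. \<Sum>h\<in>F. card (B1 g h) * L) + (\<Sum>k\<in>F-{0}. card (B2 k) * L)"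
      by (simp add: sum_distrib_right add_mult_distrib)
    also have "\<dots> \<le> (\<Sum>g\<in>F. \<Sum>h\<in>F. m) + (\<Sum>k\<in>F-{0}. m)"
      using c1 c2 by (intro add_mono sum_mono less_imp_le) auto
    also have "\<dots> \<le> T*T*m + T*m"
      using finF card_Diff1_le[of F 0] by (simp add: T_def card_Diff_subset)
    finally show ?thesis by (simp add: K0_def algebra_simps)
  qed
  define Good where "Good = {..<m} - Bad"
  have good: "q < m" "\<And>g h. g\<in>F \<Longrightarrow> h\<in>F \<Longrightarrow> \<sigma> (g+h) q = \<sigma> g (\<sigma> h q)"
     "\<And>k. k\<in>F \<Longrightarrow> k \<noteq> 0 \<Longrightarrow> \<sigma> k q \<noteq> q" if "q \<in> Good" for q
    using that by (auto simp: Good_def Bad_def B1_def B2_def)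
  have s00: "\<sigma> 0 q = q" if "q \<in> Good" for q
  proof -
    have "0 \<in> F" by (simp add: F_def)
    then have "\<sigma> 0 (\<sigma> 0 q) = \<sigma> 0 q" using good(2)[OF that, of 0 0] by simp
    then show ?thesis using inj[of 0] by (auto dest: injD)
  qed
  have sep: "\<sigma> g q \<noteq> \<sigma> g0 q" if qG: "q \<in> Good" and gS: "g \<in> S" and gg0: "g \<noteq> g0" for q g
  proof
    assume eq: "\<sigma> g q = \<sigma> g0 q"
    define k where "k = -g + g0"
    have kF: "k \<in> F" unfolding F_def k_def using gS by blast
    have gk: "g + k = g0" unfolding k_def by (rule add_minus_cancel)
    have k0: "k \<noteq> 0"
    proof
      assume "k = 0"
      then have "g + k = g" by simp
      with gk gg0 show False by simp
    qed
    have gF: "g \<in> F" using SF gS by blast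
    have "\<sigma> (g + k) q = \<sigma> g (\<sigma> k q)" by (rule good(2)[OF qG gF kF])
    then have "\<sigma> g (\<sigma> k q) = \<sigma> g q" using gk eq by simp
    then have "\<sigma> k q = q" by (rule injD[OF inj[of g]])
    with good(3)[OF qG kF k0] show False by simp
  qed
  define conf where "conf q q' = (\<exists>g\<in>S. \<sigma> g q' = \<sigma> g0 q)" for q q'
  have nb: "finite {q'. conf q q' \<or> conf q' q} \<and> card {q'. conf q q' \<or> conf q' q} \<le> 2 * card S" for q
  proof -
    have sub: "{q'. conf q q' \<or> conf q' q} \<subseteq>
      (\<lambda>g. inv_into UNIV (\<sigma> g) (\<sigma> g0 q)) ` S \<union> (\<lambda>g. inv_into UNIV (\<sigma> g0) (\<sigma> g q)) ` S"
    proof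
      fix q' assume "q' \<in> {q'. conf q q' \<or> conf q' q}"
      then obtain g where "g \<in> S" "\<sigma> g q' = \<sigma> g0 q \<or> \<sigma> g q = \<sigma> g0 q'"
        by (auto simp: conf_def)
      then show "q' \<in> (\<lambda>g. inv_into UNIV (\<sigma> g) (\<sigma> g0 q)) ` S \<union> (\<lambda>g. inv_into UNIV (\<sigma> g0) (\<sigma> g q)) ` S"
        using inv_f_f[OF inj[of g], of q'] inv_f_f[OF inj[of g0], of q'] by force
    qed
    have finS: "finite S" by (simp add: S_def)
    have "card ((\<lambda>g. inv_into UNIV (\<sigma> g) (\<sigma> g0 q)) ` S \<union> (\<lambda>g. inv_into UNIV (\<sigma> g0) (\<sigma> g q)) ` S) \<le> 2 * card S"
    proof -
      have "card ((\<lambda>g. inv_into UNIV (\<sigma> g) (\<sigma> g0 q)) ` S) \<le> card S"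
           "card ((\<lambda>g. inv_into UNIV (\<sigma> g0) (\<sigma> g q)) ` S) \<le> card S"
        by (rule card_image_le[OF finS])+
      then show ?thesis using card_Un_le[of "(\<lambda>g. inv_into UNIV (\<sigma> g) (\<sigma> g0 q)) ` S"
          "(\<lambda>g. inv_into UNIV (\<sigma> g0) (\<sigma> g q)) ` S"] by linarith
    qed
    then show ?thesis using sub finS
      by (meson card_mono finite_UnI finite_imageI finite_subset le_trans)
  qed
  have finGood: "finite Good" by (simp add: Good_def)
  obtain Q where Q: "Q \<subseteq> Good" "\<forall>q\<in>Q. \<forall>q'\<in>Q. q \<noteq> q' \<longrightarrow> \<not> conf q q'"
    "card Good \<le> d * card Q"
    using greedy[OF finGood nb] by (auto simp: d_def)
  have cGood: "card Good = m - card Bad"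
    using Bad_sub by (simp add: Good_def card_Diff_subset finite_subset)
  have cBm: "card Bad \<le> m" using Bad_sub by (metis card_lessThan card_mono finite_lessThan)
  have small: "card Bad * (n*d+1) < m"
  proof (rule ccontr)
    assume "\<not> ?thesis"
    then have "m \<le> card Bad * (n*d+1)" by simp
    then have "K0 * m \<le> K0 * (card Bad * (n*d+1))" by simp
    also have "\<dots> + card Bad = card Bad * L" by (simp add: L_def algebra_simps)
    finally have "K0 * m + card Bad \<le> K0 * m" using cBad by linarith
    then have "card Bad = 0" by simp
    with \<open>m \<le> card Bad * (n*d+1)\<close> m show False by simp
  qed
  have QB: "n * card Bad < card Q"
  proof -
    have h1: "card Bad * (n*d+1) = d*(n*card Bad) + card Bad" by (simp add: algebra_simps)
    have "d * (n * card Bad) < d * card Q"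
      using small h1 Q(3) cGood cBm by linarith
    then show ?thesis using mult_less_cancel1 by blast
  qed
  define C where "C = {..<n} \<times> {..<m}"
  define P where "P = {..<n} \<times> Good"
  define KK where "KK = (Inl ` Q \<union> Inr ` P :: (nat + nat \<times> nat) set)"
  have finQ: "finite Q" using Q(1) finGood finite_subset by blast
  have finP: "finite P" by (simp add: P_def finGood)
  have splitKK: "(\<Sum>k\<in>KK. f k) = (\<Sum>q\<in>Q. f (Inl q)) + (\<Sum>c\<in>P. f (Inr c))" for f :: "_ \<Rightarrow> 'd"
    unfolding KK_def using finQ finP
    by (subst sum.union_disjoint) (auto simp: sum.reindex)
  have cardKK: "card KK = card Q + n * card Good"
    unfolding KK_def using finQ finP
    by (subst card_Un_disjoint) (auto simp: card_image P_def card_cartesian_product)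
  have cardC: "card C < card KK"
    using QB cGood cBm by (simp add: cardKK C_def card_cartesian_product algebra_simps)
  define v where "v k c = (case k of Inl q \<Rightarrow> M \<sigma> (X$$(fst c, s0)) (snd c) q
     | Inr tq \<Rightarrow> M \<sigma> (B$$(fst c, fst tq)) (snd c) (snd tq))" for k c
  obtain lam where lam1: "\<exists>k\<in>KK. lam k \<noteq> 0" and lam2: "\<forall>c\<in>C. (\<Sum>k\<in>KK. v k c * lam k) = 0"
    using dependent[of C KK v] cardC finP finQ by (auto simp: C_def KK_def)
  have Av: "(\<Sum>c'\<in>C. M \<sigma> (A$$(r, fst c')) p (snd c') * v k c') =
      (case k of Inl q \<Rightarrow> 0 | Inr (t,q) \<Rightarrow> if r = t \<and> p = q then 1 else 0)"
    if kK: "k \<in> KK" and rn: "r < n" for k r p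
  proof (cases k)
    case (Inl q)
    then have q: "q \<in> Good" using kK Q(1) by (auto simp: KK_def)
    have "(\<Sum>c'\<in>C. M \<sigma> (A$$(r, fst c')) p (snd c') * v k c') = M \<sigma> ((A*X)$$(r,s0)) p q"
      unfolding C_def v_def Inl sum.simps using A X rs(2) rn q AF good[OF q] ltm
      by (intro col_mult) (auto simp: subset_iff)
    then show ?thesis using Inl AX rn rs(2) by simp
  next
    case (Inr tq)
    then obtain t q where tq: "k = Inr (t,q)" "t < n" "q \<in> Good"
      using kK Inr by (auto simp: KK_def P_def)
    have "(\<Sum>c'\<in>C. M \<sigma> (A$$(r, fst c')) p (snd c') * v k c') = M \<sigma> ((A*B)$$(r,t)) p q"
      unfolding C_def v_def tq sum.simps fst_conv snd_conv using A B tq rn AF good[OF tq(3)] ltm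
      by (intro col_mult) (auto simp: subset_iff)
    then show ?thesis using tq AB rn s00[OF tq(3)] by (auto simp: M_one)
  qed
  have lamInr: "lam (Inr c) = 0" if cP: "c \<in> P" for c
  proof -
    obtain t q where c: "c = (t,q)" "t < n" "q \<in> Good" using cP by (auto simp: P_def)
    have "0 = (\<Sum>c'\<in>C. M \<sigma> (A$$(t, fst c')) q (snd c') * (\<Sum>k\<in>KK. v k c' * lam k))"
      using lam2 by simp
    also have "\<dots> = (\<Sum>k\<in>KK. (\<Sum>c'\<in>C. M \<sigma> (A$$(t, fst c')) q (snd c') * v k c') * lam k)"
      by (simp add: sum_distrib_left sum_distrib_right mult.assoc sum.swap[of _ C])
    also have "\<dots> = (\<Sum>k\<in>KK. (case k of Inl q \<Rightarrow> 0 | Inr (t',q') \<Rightarrow> if t = t' \<and> q = q' then 1 else 0) * lam k)"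
      using Av c(2) by (intro sum.cong refl) auto
    also have "\<dots> = (\<Sum>c'\<in>P. if c' = c then lam (Inr c') else 0)"
      by (subst splitKK) (auto simp: c intro!: sum.cong)
    also have "\<dots> = lam (Inr c)" using cP finP by simp
    finally show ?thesis by simp
  qed
  have lamInl: "lam (Inl q) = 0" if qQ: "q \<in> Q" for q
  proof -
    have qG: "q \<in> Good" using qQ Q(1) by auto
    have cC: "(r0, \<sigma> g0 q) \<in> C" using rs ltm good(1)[OF qG] by (simp add: C_def)
    have Mq: "M \<sigma> (X$$(r0,s0)) (\<sigma> g0 q) q' = (if q' = q then x0 else 0)" if q'Q: "q' \<in> Q" for q'
    proof (cases "q' = q")
      case True
      have "M \<sigma> (X$$(r0,s0)) (\<sigma> g0 q) q = (\<Sum>g\<in>S. if \<sigma> g q = \<sigma> g0 q then pl (X$$(r0,s0)) g else 0)"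
        unfolding M_def S_def by (rule refl)
      also have "\<dots> = (\<Sum>g\<in>S. if g0 = g then pl (X$$(r0,s0)) g else 0)"
      proof (rule sum.cong[OF refl])
        fix g assume "g \<in> S"
        show "(if \<sigma> g q = \<sigma> g0 q then pl (X$$(r0,s0)) g else 0) = (if g0 = g then pl (X$$(r0,s0)) g else 0)"
        proof (cases "g = g0")
          case True then show ?thesis by simp
        next
          case False
          then have "\<sigma> g q \<noteq> \<sigma> g0 q" using sep[OF qG \<open>g \<in> S\<close>] by blast
          then show ?thesis using False by simp
        qed
      qed
      also have "\<dots> = x0" using g0 by (simp add: x0_def S_def)
      finally show ?thesis using True by simp
    next
      case False
      then have "q \<noteq> q'" by simp
      then have nc: "\<not> conf q q'" using Q(2) q'Q qQ by simp
      have "M \<sigma> (X$$(r0,s0)) (\<sigma> g0 q) q' = (\<Sum>g\<in>S. if \<sigma> g q' = \<sigma> g0 q then pl (X$$(r0,s0)) g else 0)"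
        unfolding M_def S_def by (rule refl)
      also have "\<dots> = 0"
      proof (rule sum.neutral, rule ballI)
        fix g assume "g \<in> S"
        then have "\<sigma> g q' \<noteq> \<sigma> g0 q" using nc unfolding conf_def by auto
        then show "(if \<sigma> g q' = \<sigma> g0 q then pl (X$$(r0,s0)) g else 0) = 0" by simp
      qed
      finally show ?thesis using False by simp
    qed
    have "0 = (\<Sum>k\<in>KK. v k (r0, \<sigma> g0 q) * lam k)" using lam2 cC by simp
    also have "\<dots> = (\<Sum>q'\<in>Q. v (Inl q') (r0, \<sigma> g0 q) * lam (Inl q'))"
      using lamInr by (simp add: splitKK)
    also have "\<dots> = (\<Sum>q'\<in>Q. if q' = q then x0 * lam (Inl q') else 0)"
      using Mq by (intro sum.cong refl) (auto simp: v_def)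
    also have "\<dots> = x0 * lam (Inl q)" using qQ finQ by simp
    finally show ?thesis using x0 by simp
  qed
  from lam1 lamInl lamInr show False by (auto simp: KK_def)
qed

end
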